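(* Let $\mathcal P$ be a path and let $\{p_1,\dots,p_m\}$ and $\{q_1,\dots,q_k\}$ be two different sets of plaquettes in $\mathcal B_{\mathcal P}$ such that $\bigoplus_{i=1}^m\vec\alpha^{p_i}=\bigoplus_{j=1}^k\vec\alpha^{q_j}$ when restricted to $\mathrm{Conn}(\mathcal P)$. Then for every configuration $\vec i$, $\theta_{\mathcal P}(\vec i,p_1,\dots,p_m)=\theta_{\mathcal P}(\vec i,q_1,\dots,q_k)$.
   Context: Let $\Lambda$ be a hexagonal (honeycomb) lattice embedded in a closed orientable surface, with one qubit on each edge. For an edge $j$, $\sigma^x_j,\sigma^z_j$ denote the Pauli operators on qubit $j$ and $n^{\pm}_j=\tfrac12(1\pm\sigma^z_j)$. A (string) configuration $\vec i$ is a computational basis state, viewed as a bit string assigning $0$ (empty) or $1$ (occupied) to each edge; $\vec i\oplus\vec\alpha$ is bitwise addition mod 2. For a hexagonal plaquette $p$, label its boundary edges $1,\dots,6$ cyclically (index $0$ means $6$) and its outgoing edges so that edge $12$ meets edges $6,1$; edge $7$ meets $1,2$; edge $8$ meets $2,3$; edge $9$ meets $3,4$; edge $10$ meets $4,5$; edge $11$ meets $5,6$. Define $B_p=\Big(\prod_{j=1}^6\sigma^x_j\Big)\Big(\prod_{j=1}^6(-1)^{n^-_{j-1}n^+_j}\Big)\,i^{n^-_{12}(n^-_1n^-_6-n^+_1n^+_6)}\,i^{n^-_7(n^+_1n^+_2-n^-_1n^-_2)}\,i^{n^+_8(n^-_2n^+_3-n^+_2n^-_3)}\,i^{n^-_9(n^-_3n^-_4-n^+_3n^+_4)}\,i^{n^-_{10}(n^+_4n^+_5-n^-_4n^-_5)}\,i^{n^+_{11}(n^-_5n^+_6-n^+_5n^-_6)}$;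 all $B_p$ commute pairwise and square to the identity, and the product of all $B_p$ over the lattice is the identity. Write $B_p=\prod_{j\in\partial p}\sigma^x_j\sum_{\vec i}b_p(\vec i)|\vec i\rangle\langle\vec i|$, defining the phase $b_p(\vec i)$. Let $\vec\alpha^p$ be the configuration occupied exactly on the boundary edges of $p$. A path $\mathcal P$ is a sequence of edges forming a walk; $\vec\alpha^{\mathcal P}$ is the mod-2 sum of the indicators of its edges and $X_{\mathcal P}$ the product of $\sigma^x$ over its edges. $\mathrm{Conn}(\mathcal P)$ is the set of edges of $\mathcal P$ together with all edges sharing a vertex with an edge of $\mathcal P$; $\mathcal B_{\mathcal P}$ is the set of plaquettes with at least one boundary edge in $\mathrm{Conn}(\mathcal P)$. Define $\theta_{\mathcal P}(\vec i,p_1,\dots,p_m)=\prod_{k=1}^m \frac{b_{p_k}(\vec i\oplus\vec\alpha^{\mathcal P}\oplus\bigoplus_{j<k}\vec\alpha^{p_j})}{b_{p_k}(\vec i\oplus\bigoplus_{j<k}\vec\alpha^{p_j})}$ for configurations $\vec i$ on the whole lattice. *)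

theory Defs
  imports Complex_Main
begin

text \<open>For a plaquette p,
  lab p j (j = 1..6) are its boundary edges in cyclic order and
  lab p (6+j) (j = 1..6) is the outgoing edge at the corner where boundary
  edges j and j+1 meet (index 7 means 1), i.e. edge 7 meets 1,2, ..., edge 12 meets 6,1.\<close>

definition nxt6 :: "nat \<Rightarrow> nat" where
  "nxt6 j = (if j = 6 then 1 else j + 1)"

definition prv6 :: "nat \<Rightarrow> nat" where
  "prv6 j = (if j = 1 then 6 else j - 1)"

definition symd :: "'a set \<Rightarrow> 'a set \<Rightarrow> 'a set" where
  "symd A B = (A - B) \<union> (B - A)"

definition honeycomb ::
  "'v set \<Rightarrow> 'e set \<Rightarrow> 'p set \<Rightarrow> ('e \<Rightarrow> 'v set) \<Rightarrow> ('p \<Rightarrow> nat \<Rightarrow> 'e) \<Rightarrow> bool" where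
  "honeycomb V E P ends lab \<longleftrightarrow>
     finite V \<and> finite E \<and> finite P \<and> P \<noteq> {} \<and>
     (\<forall>e\<in>E. ends e \<subseteq> V \<and> card (ends e) = 2) \<and>
     (\<forall>v\<in>V. card {e\<in>E. v \<in> ends e} = 3) \<and>
     (\<forall>p\<in>P. lab p ` {1..12} \<subseteq> E \<and> inj_on (lab p) {1..12} \<and>
        (\<forall>j\<in>{1..6}. ends (lab p (j + 6)) \<inter> ends (lab p j) \<inter> ends (lab p (nxt6 j)) \<noteq> {})) \<and>
     (\<forall>e\<in>E. card {p\<in>P. e \<in> lab p ` {1..6}} = 2) \<and>
     \<comment> \<open>orientability: the cyclic labellings induce opposite directions on shared edges\<close>
     (\<forall>p\<in>P. \<forall>q\<in>P. \<forall>j\<in>{1..6}. \<forall>k\<in>{1..6}. p \<noteq> q \<and> lab p j = lab q k \<longrightarrow>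
        ends (lab p j) \<inter> ends (lab p (nxt6 j)) \<noteq> ends (lab q k) \<inter> ends (lab q (nxt6 k))) \<and>
     \<comment> \<open>connectedness\<close>
     (\<forall>u\<in>V. \<forall>v\<in>V. (u, v) \<in> {(x, y). \<exists>e\<in>E. ends e = {x, y}}\<^sup>*)"

text \<open>A configuration is the set of occupied edges (a subset of E); bitwise
  addition mod 2 is symmetric difference.  n^-_k = 1 iff edge k is occupied
  (sigma^z = -1 on |1>), n^+_k = 1 iff edge k is empty.\<close>

definition alpha_p :: "('p \<Rightarrow> nat \<Rightarrow> 'e) \<Rightarrow> 'p \<Rightarrow> 'e set" where
  "alpha_p lab p = lab p ` {1..6}"

definition bphase :: "('p \<Rightarrow> nat \<Rightarrow> 'e) \<Rightarrow> 'p \<Rightarrow> 'e set \<Rightarrow> complex" where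
  "bphase lab p i =
     (let nm = (\<lambda>k. if lab p k \<in> i then (1::int) else 0);
          np = (\<lambda>k. if lab p k \<in> i then (0::int) else 1)
      in (\<Prod>j\<in>{1..6}. (-1::complex) powi (nm (prv6 j) * np j))
         * \<i> powi (nm 12 * (nm 1 * nm 6 - np 1 * np 6))
         * \<i> powi (nm 7 * (np 1 * np 2 - nm 1 * nm 2))
         * \<i> powi (np 8 * (nm 2 * np 3 - np 2 * nm 3))
         * \<i> powi (nm 9 * (nm 3 * nm 4 - np 3 * np 4))
         * \<i> powi (nm 10 * (np 4 * np 5 - nm 4 * nm 5))
         * \<i> powi (np 11 * (nm 5 * np 6 - np 5 * nm 6)))"

text \<open>B_p |i> = b_p(i) |i + alpha^p>.  Phase of B_{p_m} ... B_{p_1} |i> (p_1 applied first).\<close>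

fun prodphase :: "('p \<Rightarrow> nat \<Rightarrow> 'e) \<Rightarrow> 'p list \<Rightarrow> 'e set \<Rightarrow> complex" where
  "prodphase lab [] i = 1"
| "prodphase lab (p # ps) i = bphase lab p i * prodphase lab ps (symd i (alpha_p lab p))"

definition B_commute :: "'e set \<Rightarrow> 'p set \<Rightarrow> ('p \<Rightarrow> nat \<Rightarrow> 'e) \<Rightarrow> bool" where
  "B_commute E P lab \<longleftrightarrow> (\<forall>p\<in>P. \<forall>q\<in>P. \<forall>i. i \<subseteq> E \<longrightarrow>
     bphase lab q (symd i (alpha_p lab p)) * bphase lab p i =
     bphase lab p (symd i (alpha_p lab q)) * bphase lab q i)"

definition B_square_id :: "'e set \<Rightarrow> 'p set \<Rightarrow> ('p \<Rightarrow> nat \<Rightarrow> 'e) \<Rightarrow> bool" where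
  "B_square_id E P lab \<longleftrightarrow> (\<forall>p\<in>P. \<forall>i. i \<subseteq> E \<longrightarrow>
     bphase lab p (symd i (alpha_p lab p)) * bphase lab p i = 1)"

definition xsum :: "('p \<Rightarrow> 'e set) \<Rightarrow> 'p list \<Rightarrow> 'e set" where
  "xsum a ps = foldr (\<lambda>p acc. symd (a p) acc) ps {}"

definition B_product_id :: "'e set \<Rightarrow> 'p set \<Rightarrow> ('p \<Rightarrow> nat \<Rightarrow> 'e) \<Rightarrow> bool" where
  "B_product_id E P lab \<longleftrightarrow> (\<forall>ps. distinct ps \<and> set ps = P \<longrightarrow>
     xsum (alpha_p lab) ps = {} \<and> (\<forall>i. i \<subseteq> E \<longrightarrow> prodphase lab ps i = 1))"

definition is_walk :: "'e set \<Rightarrow> ('e \<Rightarrow> 'v set) \<Rightarrow> 'e list \<Rightarrow> bool" where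
  "is_walk E ends es \<longleftrightarrow> (\<exists>vs. length vs = length es + 1 \<and>
     (\<forall>k < length es. es ! k \<in> E \<and> ends (es ! k) = {vs ! k, vs ! Suc k}))"

definition alpha_path :: "'e list \<Rightarrow> 'e set" where
  "alpha_path es = {e. odd (length (filter (\<lambda>f. f = e) es))}"

definition Conn :: "'e set \<Rightarrow> ('e \<Rightarrow> 'v set) \<Rightarrow> 'e list \<Rightarrow> 'e set" where
  "Conn E ends es = set es \<union> {f\<in>E. \<exists>e\<in>set es. ends e \<inter> ends f \<noteq> {}}"

definition Bplaq :: "'e set \<Rightarrow> 'p set \<Rightarrow> ('e \<Rightarrow> 'v set) \<Rightarrow> ('p \<Rightarrow> nat \<Rightarrow> 'e) \<Rightarrow> 'e list \<Rightarrow> 'p set" where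
  "Bplaq E P ends lab es = {p\<in>P. alpha_p lab p \<inter> Conn E ends es \<noteq> {}}"

definition theta :: "('p \<Rightarrow> nat \<Rightarrow> 'e) \<Rightarrow> 'e list \<Rightarrow> 'e set \<Rightarrow> 'p list \<Rightarrow> complex" where
  "theta lab es i ps =
     (\<Prod>k<length ps.
        bphase lab (ps ! k) (symd (symd i (alpha_path es)) (xsum (alpha_p lab) (take k ps)))
        / bphase lab (ps ! k) (symd i (xsum (alpha_p lab) (take k ps))))"

end

theory Submission imports Defs "HOL-Library.Multiset" begin

lemma symd_assoc: "symd (symd a b) c = symd a (symd b c)" by (auto simp: symd_def)
lemma symd_comm: "symd a b = symd b a" by (auto simp: symd_def)
lemma symd_lcomm: "symd a (symd b c) = symd b (symd a c)" by (auto simp: symd_def)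
lemma symd_self[simp]: "symd a a = {}" by (auto simp: symd_def)
lemma symd_empty[simp]: "symd a {} = a" "symd {} a = a" by (auto simp: symd_def)
lemma symd_cancel[simp]: "symd (symd a b) b = a" "symd a (symd a b) = b" by (auto simp: symd_def)

lemma bphase_loc:
  assumes h: "\<And>k. k\<in>{1..12} \<Longrightarrow> (lab p k \<in> x) = (lab p k \<in> y)"
  shows "bphase lab p x = bphase lab p y"
proof -
  have pr: "prv6 j \<in> {1..12}" if "j \<in> {1..6}" for j using that by (auto simp: prv6_def)
  have "(\<Prod>j\<in>{1..6}. (-1::complex) powi ((if lab p (prv6 j) \<in> x then 1 else 0) * (if lab p j \<in> x then 0 else 1)))
      = (\<Prod>j\<in>{1..6}. (-1::complex) powi ((if lab p (prv6 j) \<in> y then 1 else 0) * (if lab p j \<in> y then 0 else 1)))"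
  proof (rule prod.cong)
    fix j assume j: "j \<in> {1..6::nat}"
    have a: "(lab p (prv6 j) \<in> x) = (lab p (prv6 j) \<in> y)" using h pr j by blast
    have b: "(lab p j \<in> x) = (lab p j \<in> y)" using h j by auto
    show "(-1::complex) powi ((if lab p (prv6 j) \<in> x then 1 else 0) * (if lab p j \<in> x then 0 else 1)) = (-1::complex) powi ((if lab p (prv6 j) \<in> y then 1 else 0) * (if lab p j \<in> y then 0 else 1))"
      by (simp only: a b)
  qed simp
  moreover have "\<And>k. k \<in> {1,2,3,4,5,6,7,8,9,10,11,12} \<Longrightarrow> (lab p k \<in> x) = (lab p k \<in> y)" using h by auto
  ultimately show ?thesis unfolding bphase_def Let_def by simp
qed

lemma bphase_nz: "bphase lab p x \<noteq> 0"
  unfolding bphase_def Let_def by (simp add: power_int_def)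


lemma xsum_Nil[simp]: "xsum a [] = {}" by (simp add: xsum_def)
lemma xsum_Cons[simp]: "xsum a (p#xs) = symd (a p) (xsum a xs)" by (simp add: xsum_def)
lemma xsum_append: "xsum a (xs@ys) = symd (xsum a xs) (xsum a ys)"
  by (induction xs) (auto simp: symd_assoc)
lemma xsum_count: "xsum a xs = {f. odd (length (filter (\<lambda>p. f \<in> a p) xs))}"
  by (induction xs) (auto simp: symd_def)
lemma xsum_mset: "mset xs = mset ys \<Longrightarrow> xsum a xs = xsum a ys"
  unfolding xsum_count by (metis mset_filter size_mset)

lemma prodphase_append:
  "prodphase lab (xs@ys) x = prodphase lab xs x * prodphase lab ys (symd x (xsum (alpha_p lab) xs))"
  by (induction xs arbitrary: x) (auto simp: symd_assoc)

lemma prodphase_loc: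
  "(\<And>p k. p \<in> set xs \<Longrightarrow> k\<in>{1..12} \<Longrightarrow> (lab p k \<in> x) = (lab p k \<in> y)) \<Longrightarrow>
   prodphase lab xs x = prodphase lab xs y"
proof (induction xs arbitrary: x y)
  case Nil then show ?case by simp
next
  case (Cons p xs)
  have 1: "bphase lab p x = bphase lab p y" by (rule bphase_loc) (use Cons.prems in auto)
  have 2: "prodphase lab xs (symd x (alpha_p lab p)) = prodphase lab xs (symd y (alpha_p lab p))"
    by (rule Cons.IH) (use Cons.prems in \<open>auto simp: symd_def\<close>)
  show ?case using 1 2 by simp
qed

lemma prodphase_nz: "prodphase lab xs x \<noteq> 0"
  by (induction xs arbitrary: x) (auto simp: bphase_nz)

lemma prodphase_prod:
  "prodphase lab ps x = (\<Prod>k<length ps. bphase lab (ps ! k) (symd x (xsum (alpha_p lab) (take k ps))))"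
proof (induction ps arbitrary: x)
  case Nil then show ?case by simp
next
  case (Cons p ps)
  show ?case
    by (simp add: Cons.IH prod.lessThan_Suc_shift symd_assoc del: prod.lessThan_Suc)
qed

lemma theta_eq: "theta lab es i ps = prodphase lab ps (symd i (alpha_path es)) / prodphase lab ps i"
  unfolding theta_def prodphase_prod by (simp add: prod_dividef)

locale hcl =
  fixes V :: "'v set" and E :: "'e set" and P :: "'p set"
    and ends :: "'e \<Rightarrow> 'v set" and lab :: "'p \<Rightarrow> nat \<Rightarrow> 'e"
  assumes hc: "honeycomb V E P ends lab"
    and com: "B_commute E P lab" and sq: "B_square_id E P lab" and pid: "B_product_id E P lab"
begin

lemma labE: "p \<in> P \<Longrightarrow> k \<in> {1..12} \<Longrightarrow> lab p k \<in> E"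
  using hc unfolding honeycomb_def by blast

lemma alphaE: "p \<in> P \<Longrightarrow> alpha_p lab p \<subseteq> E"
  using labE unfolding alpha_p_def by auto

lemma bphase_E: "p \<in> P \<Longrightarrow> bphase lab p x = bphase lab p (x \<inter> E)"
  by (rule bphase_loc) (use labE in auto)

lemma com_all: assumes "p \<in> P" "q \<in> P"
  shows "bphase lab q (symd x (alpha_p lab p)) * bphase lab p x =
         bphase lab p (symd x (alpha_p lab q)) * bphase lab q x"
proof -
  have "bphase lab q (symd (x\<inter>E) (alpha_p lab p)) * bphase lab p (x\<inter>E) =
        bphase lab p (symd (x\<inter>E) (alpha_p lab q)) * bphase lab q (x\<inter>E)"
    using com assms unfolding B_commute_def by blast
  moreover have "bphase lab q (symd (x\<inter>E) (alpha_p lab p)) = bphase lab q (symd x (alpha_p lab p))"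
    by (rule bphase_loc) (use labE assms in \<open>auto simp: symd_def\<close>)
  moreover have "bphase lab p (symd (x\<inter>E) (alpha_p lab q)) = bphase lab p (symd x (alpha_p lab q))"
    by (rule bphase_loc) (use labE assms in \<open>auto simp: symd_def\<close>)
  ultimately show ?thesis using bphase_E assms by metis
qed

lemma sq_all: assumes "p \<in> P"
  shows "bphase lab p (symd x (alpha_p lab p)) * bphase lab p x = 1"
proof -
  have "bphase lab p (symd (x\<inter>E) (alpha_p lab p)) * bphase lab p (x\<inter>E) = 1"
    using sq assms unfolding B_square_id_def by blast
  moreover have "bphase lab p (symd (x\<inter>E) (alpha_p lab p)) = bphase lab p (symd x (alpha_p lab p))"
    by (rule bphase_loc) (use labE assms in \<open>auto simp: symd_def\<close>)
  ultimately show ?thesis using bphase_E assms by metis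
qed

lemma pid_all: assumes "distinct ps" "set ps = P" shows "prodphase lab ps x = 1"
proof -
  have "prodphase lab ps (x \<inter> E) = 1" using pid assms unfolding B_product_id_def by blast
  moreover have "prodphase lab ps (x \<inter> E) = prodphase lab ps x"
    by (rule prodphase_loc) (use labE assms in auto)
  ultimately show ?thesis by simp
qed

lemma swap: assumes "p \<in> P" "q \<in> P"
  shows "prodphase lab (p#q#xs) x = prodphase lab (q#p#xs) x"
proof -
  have "symd (symd x (alpha_p lab p)) (alpha_p lab q) = symd (symd x (alpha_p lab q)) (alpha_p lab p)"
    by (auto simp: symd_def)
  then show ?thesis using com_all[OF assms, of x]
    by (simp add: mult.assoc[symmetric]) (metis mult.commute)
qed

lemma move_front: "set xs \<subseteq> P \<Longrightarrow> a \<in> set xs \<Longrightarrow>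
   prodphase lab xs x = prodphase lab (a # remove1 a xs) x"
proof (induction xs arbitrary: x)
  case Nil then show ?case by simp
next
  case (Cons b ys)
  show ?case
  proof (cases "a = b")
    case True then show ?thesis by simp
  next
    case False
    then have "a \<in> set ys" using Cons by simp
    have "prodphase lab (b#ys) x = bphase lab b x * prodphase lab ys (symd x (alpha_p lab b))" by simp
    also have "\<dots> = bphase lab b x * prodphase lab (a # remove1 a ys) (symd x (alpha_p lab b))"
      using Cons.IH[OF _ \<open>a \<in> set ys\<close>] Cons.prems by simp
    also have "\<dots> = prodphase lab (b # a # remove1 a ys) x" by simp
    also have "\<dots> = prodphase lab (a # b # remove1 a ys) x"
      by (rule swap) (use Cons.prems \<open>a \<in> set ys\<close> in auto)
    finally show ?thesis using False by simp
  qed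
qed

lemma perm_inv: "mset xs = mset ys \<Longrightarrow> set xs \<subseteq> P \<Longrightarrow> prodphase lab xs x = prodphase lab ys x"
proof (induction xs arbitrary: ys x)
  case Nil then show ?case by (metis mset_zero_iff_right mset.simps(1))
next
  case (Cons a xs)
  have a: "a \<in> set ys" using Cons.prems by (metis list.set_intros(1) set_mset_mset)
  have sy: "set ys \<subseteq> P" using Cons.prems by (metis set_mset_mset)
  have "prodphase lab ys x = prodphase lab (a # remove1 a ys) x" by (rule move_front[OF sy a])
  moreover have "mset xs = mset (remove1 a ys)" using Cons.prems(1) by (simp, metis add_mset_remove_trivial)
  ultimately show ?case using Cons by simp
qed

lemma square_list: "set xs \<subseteq> P \<Longrightarrow>
   prodphase lab xs y * prodphase lab xs (symd y (xsum (alpha_p lab) xs)) = 1"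
proof (induction xs arbitrary: y)
  case Nil then show ?case by simp
next
  case (Cons p xs)
  let ?X = "xsum (alpha_p lab) xs" and ?a = "alpha_p lab p"
  have pP: "p \<in> P" using Cons by simp
  have "prodphase lab (p#xs) (symd y (xsum (alpha_p lab) (p#xs))) =
        prodphase lab (xs@[p]) (symd y (xsum (alpha_p lab) (p#xs)))"
    by (rule perm_inv) (use Cons.prems in auto)
  also have "\<dots> = prodphase lab xs (symd (symd y ?a) ?X) * bphase lab p (symd y ?a)"
    by (simp add: prodphase_append symd_assoc symd_lcomm[of ?a])
  finally have 1: "prodphase lab (p#xs) (symd y (xsum (alpha_p lab) (p#xs))) = \<dots>" .
  have 2: "prodphase lab xs (symd y ?a) * prodphase lab xs (symd (symd y ?a) ?X) = 1"
    using Cons by simp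
  have 3: "bphase lab p (symd (symd y ?a) ?a) * bphase lab p (symd y ?a) = 1" by (rule sq_all[OF pP])
  have "prodphase lab (p#xs) y * prodphase lab (p#xs) (symd y (xsum (alpha_p lab) (p#xs)))
     = (bphase lab p y * prodphase lab xs (symd y ?a)) * (prodphase lab xs (symd (symd y ?a) ?X) * bphase lab p (symd y ?a))"
    by (subst 1) simp
  also have "\<dots> = (bphase lab p (symd (symd y ?a) ?a) * bphase lab p (symd y ?a)) * (prodphase lab xs (symd y ?a) * prodphase lab xs (symd (symd y ?a) ?X))"
    by (simp add: ac_simps)
  also have "\<dots> = 1" by (simp only: 2 3 mult_1)
  finally show ?case .
qed

end

context hcl begin

lemma key_alg:
  assumes "set ds \<subseteq> P" "set fs \<subseteq> P"
    and L: "\<And>y. prodphase lab (ds@fs) (symd y a) = prodphase lab (ds@fs) y"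
  shows "prodphase lab ds (symd z a) / prodphase lab ds z = prodphase lab fs (symd z a) / prodphase lab fs z"
proof -
  let ?g = "prodphase lab" and ?XF = "xsum (alpha_p lab) fs"
  have perm: "?g (ds@fs) y = ?g fs y * ?g ds (symd y ?XF)" for y
  proof -
    have "?g (ds@fs) y = ?g (fs@ds) y" by (rule perm_inv) (use assms in auto)
    then show ?thesis by (simp add: prodphase_append)
  qed
  have sqf: "?g fs (symd w ?XF) = 1 / ?g fs w" for w
    using square_list[OF assms(2), of w] prodphase_nz[of lab fs w]
    by (simp add: field_simps)
  have eq: "symd (symd z ?XF) a = symd (symd z a) ?XF" by (auto simp: symd_def)
  have "?g (ds@fs) (symd (symd z a) ?XF) = ?g (ds@fs) (symd z ?XF)" using L[of "symd z ?XF"] eq by simp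
  then have "?g fs (symd (symd z a) ?XF) * ?g ds (symd z a) = ?g fs (symd z ?XF) * ?g ds z"
    by (simp only: perm symd_cancel)
  then have "?g ds (symd z a) / ?g fs (symd z a) = ?g ds z / ?g fs z"
    unfolding sqf by (simp add: field_simps)
  then show ?thesis using prodphase_nz[of lab fs] prodphase_nz[of lab ds]
    by (simp add: field_simps)
qed

lemma finP: "finite P" using hc unfolding honeycomb_def by blast
lemma finE: "finite E" using hc unfolding honeycomb_def by blast

lemma flip_inv:
  assumes sl: "set sl \<subseteq> P" "distinct sl"
    and pr: "(\<forall>p\<in>P. e \<in> lab p ` {1..12} \<longrightarrow> p \<in> set sl) \<or> (\<forall>p\<in>P. e \<in> lab p ` {1..12} \<longrightarrow> p \<notin> set sl)"
  shows "prodphase lab sl (symd w {e}) = prodphase lab sl w"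
  using pr
proof
  assume "\<forall>p\<in>P. e \<in> lab p ` {1..12} \<longrightarrow> p \<notin> set sl"
  then show ?thesis
    by (intro prodphase_loc) (use sl in \<open>auto simp: symd_def\<close>)
next
  assume A: "\<forall>p\<in>P. e \<in> lab p ` {1..12} \<longrightarrow> p \<in> set sl"
  obtain rl where rl: "distinct rl" "set rl = P - set sl"
    using finite_distinct_list[of "P - set sl"] finP by blast
  have one: "prodphase lab sl x * prodphase lab rl (symd x (xsum (alpha_p lab) sl)) = 1" for x
    using pid_all[of "sl@rl"] rl sl by (auto simp: prodphase_append)
  have loc: "prodphase lab rl (symd (symd w {e}) (xsum (alpha_p lab) sl)) = prodphase lab rl (symd w (xsum (alpha_p lab) sl))"
    by (intro prodphase_loc) (use A rl in \<open>auto simp: symd_def\<close>)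
  show ?thesis using one[of w] one[of "symd w {e}"] loc prodphase_nz[of lab rl]
    by (metis mult.commute mult_right_cancel)
qed

lemma path_inv:
  assumes sl: "set sl \<subseteq> P" "distinct sl"
    and "finite Z"
    and pr: "\<And>e. e \<in> Z \<Longrightarrow> (\<forall>p\<in>P. e \<in> lab p ` {1..12} \<longrightarrow> p \<in> set sl) \<or> (\<forall>p\<in>P. e \<in> lab p ` {1..12} \<longrightarrow> p \<notin> set sl)"
  shows "prodphase lab sl (symd w Z) = prodphase lab sl w"
  using assms(3,4)
proof (induction Z arbitrary: w rule: finite_induct)
  case empty then show ?case by simp
next
  case (insert e Z)
  have "symd w (insert e Z) = symd (symd w Z) {e}" using insert by (auto simp: symd_def)
  then show ?case using flip_inv[OF sl insert.prems[of e]] insert by simp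
qed

end

lemma idx6: "m \<in> {1..6::nat} \<Longrightarrow> m = 1 \<or> m = 2 \<or> m = 3 \<or> m = 4 \<or> m = 5 \<or> m = 6" by auto

lemma idx_facts: assumes "m \<in> {1..6::nat}"
  shows "nxt6 m \<in> {1..6}" "prv6 m \<in> {1..6}" "nxt6 (prv6 m) = m" "nxt6 m \<noteq> m" "prv6 m \<noteq> m"
    "nxt6 m \<noteq> prv6 m"
  using idx6[OF assms] by (auto simp: nxt6_def prv6_def)

context hcl begin

lemma ends_e: "e \<in> E \<Longrightarrow> ends e \<subseteq> V \<and> card (ends e) = 2" using hc unfolding honeycomb_def by blast
lemma deg: "v \<in> V \<Longrightarrow> card {e\<in>E. v \<in> ends e} = 3" using hc unfolding honeycomb_def by blast
lemma injl: "p \<in> P \<Longrightarrow> a \<in> {1..12} \<Longrightarrow> b \<in> {1..12} \<Longrightarrow> lab p a = lab p b \<Longrightarrow> a = b"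
  using hc unfolding honeycomb_def inj_on_def by blast
lemma corner: "p \<in> P \<Longrightarrow> j \<in> {1..6} \<Longrightarrow> ends (lab p (j + 6)) \<inter> ends (lab p j) \<inter> ends (lab p (nxt6 j)) \<noteq> {}"
  using hc unfolding honeycomb_def by blast
lemma two: "e \<in> E \<Longrightarrow> card {p\<in>P. e \<in> lab p ` {1..6}} = 2" using hc unfolding honeycomb_def by blast

lemma three_at:
  assumes "v \<in> V" "a \<in> E" "b \<in> E" "c \<in> E" "a \<noteq> b" "a \<noteq> c" "b \<noteq> c"
    "v \<in> ends a" "v \<in> ends b" "v \<in> ends c"
  shows "{f\<in>E. v \<in> ends f} = {a,b,c}"
proof -
  have "{a,b,c} \<subseteq> {f\<in>E. v \<in> ends f}" using assms by auto
  moreover have "card {a,b,c} = 3" using assms by auto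
  moreover have "finite {f\<in>E. v \<in> ends f}" using finE by simp
  ultimately show ?thesis using deg[OF assms(1)] by (metis card_subset_eq)
qed

lemma two_faces:
  assumes "e \<in> E" "p \<in> P" "q \<in> P" "p \<noteq> q" "e \<in> alpha_p lab p" "e \<in> alpha_p lab q"
  shows "{r\<in>P. e \<in> alpha_p lab r} = {p,q}"
proof -
  have "{p,q} \<subseteq> {r\<in>P. e \<in> alpha_p lab r}" using assms by auto
  moreover have "card {p,q} = 2" using assms by auto
  moreover have "finite {r\<in>P. e \<in> alpha_p lab r}" using finP by simp
  ultimately show ?thesis using two[OF assms(1)] unfolding alpha_p_def by (metis card_subset_eq)
qed

lemma corner_side:
  assumes p: "p \<in> P" and m: "m \<in> {1..6}" and w: "w \<in> ends (lab p m)"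
  shows "\<exists>g \<in> {lab p (nxt6 m), lab p (prv6 m)}. w \<in> ends g"
proof -
  note ix = idx_facts[OF m]
  obtain c1 where c1: "c1 \<in> ends (lab p (m + 6))" "c1 \<in> ends (lab p m)" "c1 \<in> ends (lab p (nxt6 m))"
    using corner[OF p m] by blast
  obtain c0 where c0: "c0 \<in> ends (lab p (prv6 m + 6))" "c0 \<in> ends (lab p (prv6 m))" "c0 \<in> ends (lab p m)"
    using corner[OF p ix(2)] ix(3) by auto
  have i12: "k \<in> {1..12}" if "k \<in> {1..6}" for k :: nat using that by auto
  have i12': "k + 6 \<in> {1..12}" if "k \<in> {1..6}" for k :: nat using that by auto
  have mE: "lab p m \<in> E" by (rule labE[OF p i12[OF m]])
  have "c0 \<noteq> c1"
  proof
    assume eq: "c0 = c1"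
    have cV: "c1 \<in> V" using ends_e[OF mE] c1 by blast
    let ?a = "lab p m" and ?b = "lab p (nxt6 m)" and ?c = "lab p (m+6)" and ?d = "lab p (prv6 m)"
    have ne: "lab p x \<noteq> lab p y" if "x \<in> {1..12}" "y \<in> {1..12}" "x \<noteq> y" for x y
      using injl[OF p] that by blast
    have r: "nxt6 m \<le> 6" "prv6 m \<le> 6" "1 \<le> nxt6 m" "1 \<le> prv6 m" "m \<le> 6" "1 \<le> m" using ix(1,2) m by auto
    have d1: "?a \<noteq> ?b" "?a \<noteq> ?c" "?b \<noteq> ?c" "?a \<noteq> ?d" "?b \<noteq> ?d" "?c \<noteq> ?d"
      by (rule ne; use r ix in simp)+
    have "{f\<in>E. c1 \<in> ends f} = {?a,?b,?c}"
      by (rule three_at) (use cV labE[OF p] i12 i12' m ix c1 d1 in auto)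
    moreover have "?d \<in> {f\<in>E. c1 \<in> ends f}" using labE[OF p] i12 ix c0 eq by auto
    ultimately show False using d1 by auto
  qed
  have "w = c0 \<or> w = c1"
  proof (rule ccontr)
    assume "\<not> ?thesis"
    then have "{w,c0,c1} \<subseteq> ends (lab p m)" "card {w,c0,c1} = 3" using w c0 c1 \<open>c0 \<noteq> c1\<close> by auto
    moreover have "finite (ends (lab p m))" using ends_e[OF mE] by (intro card_ge_0_finite) simp
    ultimately have "card {w,c0,c1} \<le> card (ends (lab p m))" using card_mono by blast
    then show False using ends_e[OF mE] \<open>card {w,c0,c1} = 3\<close> by simp
  qed
  then show ?thesis using c0 c1 by auto
qed

end

context hcl begin

lemma leg_link:
  assumes p: "p \<in> P" and j: "j \<in> {1..6}" and e: "e = lab p (j+6)" and p1: "p1 \<in> P"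
    and e1: "e \<in> alpha_p lab p1"
  shows "\<exists>g\<in>E. g \<in> alpha_p lab p \<and> g \<in> alpha_p lab p1 \<and> ends e \<inter> ends g \<noteq> {} \<and> p \<noteq> p1"
proof -
  note ixj = idx_facts[OF j]
  obtain w where w: "w \<in> ends e" "w \<in> ends (lab p j)" "w \<in> ends (lab p (nxt6 j))"
    using corner[OF p j] e by blast
  obtain m where m: "m \<in> {1..6}" "e = lab p1 m" using e1 unfolding alpha_p_def by blast
  note ixm = idx_facts[OF m(1)]
  obtain g where g: "g \<in> {lab p1 (nxt6 m), lab p1 (prv6 m)}" "w \<in> ends g"
    using corner_side[OF p1 m(1)] w m by blast
  have gE: "g \<in> E" using g labE[OF p1] ixm by auto
  have ga: "g \<in> alpha_p lab p1" using g ixm unfolding alpha_p_def by auto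
  have ne: "lab q x \<noteq> lab q y" if "q \<in> P" "x \<in> {1..12}" "y \<in> {1..12}" "x \<noteq> y" for q x y
    using injl that by blast
  have rm: "nxt6 m \<le> 6" "prv6 m \<le> 6" "1 \<le> nxt6 m" "1 \<le> prv6 m" "m \<le> 6" "1 \<le> m" using ixm(1,2) m by auto
  have rj: "nxt6 j \<le> 6" "1 \<le> nxt6 j" "j \<le> 6" "1 \<le> j" using ixj(1) j by auto
  have gne: "g \<noteq> e"
    using g m(2) ne[OF p1, of "nxt6 m" m] ne[OF p1, of "prv6 m" m] rm ixm by auto
  have d: "e \<noteq> lab p j" "e \<noteq> lab p (nxt6 j)" "lab p j \<noteq> lab p (nxt6 j)"
    unfolding e by (rule ne[OF p]; use rj ixj in simp)+
  have eE: "e \<in> E" using e labE[OF p] j by auto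
  have wV: "w \<in> V" using ends_e[OF eE] w by blast
  have "{f\<in>E. w \<in> ends f} = {e, lab p j, lab p (nxt6 j)}"
    by (rule three_at) (use wV eE labE[OF p] j ixj d w in auto)
  then have "g = lab p j \<or> g = lab p (nxt6 j)" using gE g gne by auto
  then have gp: "g \<in> alpha_p lab p" using j ixj unfolding alpha_p_def by auto
  have "p \<noteq> p1"
  proof
    assume "p = p1"
    then obtain k where "k \<in> {1..6}" "lab p (j+6) = lab p k" using e1 e unfolding alpha_p_def by auto
    then show False using injl[OF p, of "j+6" k] j by auto
  qed
  then show ?thesis using gE gp ga w g by blast
qed

lemma status:
  assumes eE: "e \<in> E"
    and par: "\<And>g a b. g \<in> E \<Longrightarrow> (ends e \<inter> ends g \<noteq> {} \<or> g = e) \<Longrightarrow> a \<in> P \<Longrightarrow> b \<in> P \<Longrightarrow> a \<noteq> b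
        \<Longrightarrow> g \<in> alpha_p lab a \<Longrightarrow> g \<in> alpha_p lab b \<Longrightarrow> (a \<in> S \<longleftrightarrow> b \<in> S)"
  shows "(\<forall>p\<in>P. e \<in> lab p ` {1..12} \<longrightarrow> p \<in> S) \<or> (\<forall>p\<in>P. e \<in> lab p ` {1..12} \<longrightarrow> p \<notin> S)"
proof -
  have "{p\<in>P. e \<in> lab p ` {1..6}} \<noteq> {}" using two[OF eE] by (metis card.empty zero_neq_numeral)
  then obtain p1 where p1: "p1 \<in> P" "e \<in> alpha_p lab p1" unfolding alpha_p_def by blast
  have "p \<in> S \<longleftrightarrow> p1 \<in> S" if p: "p \<in> P" "e \<in> lab p ` {1..12}" for p
  proof (cases "e \<in> alpha_p lab p")
    case True
    then show ?thesis using par[OF eE _ p(1) p1(1)] p1 by blast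
  next
    case False
    obtain k where k0: "k \<in> {1..12}" "e = lab p k" using p by auto
    have "k \<notin> {1..6}" using False k0 unfolding alpha_p_def by auto
    note k = k0 this
    then have j: "k - 6 \<in> {1..6}" "k = (k - 6) + 6" by auto
    obtain g where "g \<in> E" "g \<in> alpha_p lab p" "g \<in> alpha_p lab p1" "ends e \<inter> ends g \<noteq> {}" "p \<noteq> p1"
      using leg_link[OF p(1) j(1) _ p1] k j by metis
    then show ?thesis using par p p1 by blast
  qed
  then show ?thesis by blast
qed

end

lemma card_pair_int: "a \<noteq> b \<Longrightarrow> card (A \<inter> {a,b}) = (if a \<in> A then 1 else 0) + (if b \<in> A then 1 else (0::nat))"
  by (cases "a \<in> A"; cases "b \<in> A") (auto simp: Int_insert_right)

lemma walk_set: "is_walk E ends path \<Longrightarrow> set path \<subseteq> E"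
  unfolding is_walk_def by (auto simp: in_set_conv_nth)

lemma alpha_path_sub: "alpha_path es \<subseteq> set es"
proof
  fix x assume "x \<in> alpha_path es"
  then have "odd (length (filter (\<lambda>f. f = x) es))" unfolding alpha_path_def by simp
  show "x \<in> set es"
  proof (rule ccontr)
    assume "x \<notin> set es"
    then have "filter (\<lambda>f. f = x) es = []" by (auto simp: filter_empty_conv)
    then show False using \<open>odd (length (filter (\<lambda>f. f = x) es))\<close> by simp
  qed
qed

theorem lemma2:
  fixes V :: "'v set" and E :: "'e set" and P :: "'p set"
    and ends :: "'e \<Rightarrow> 'v set" and lab :: "'p \<Rightarrow> nat \<Rightarrow> 'e"
    and path :: "'e list" and ps qs :: "'p list"
  assumes "honeycomb V E P ends lab"
    and "B_commute E P lab" and "B_square_id E P lab" and "B_product_id E P lab"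
    and "is_walk E ends path"
    and "distinct ps" and "distinct qs"
    and "set ps \<subseteq> Bplaq E P ends lab path" and "set qs \<subseteq> Bplaq E P ends lab path"
    and "set ps \<noteq> set qs"
    and "xsum (alpha_p lab) ps \<inter> Conn E ends path = xsum (alpha_p lab) qs \<inter> Conn E ends path"
  shows "\<forall>i. i \<subseteq> E \<longrightarrow> theta lab path i ps = theta lab path i qs"
proof (intro allI impI)
  fix i
  interpret hcl V E P ends lab using assms(1-4) by unfold_locales
  let ?g = "prodphase lab" and ?a = "alpha_path path"
  define A where "A = set ps"
  define B where "B = set qs"
  define cs where "cs = filter (\<lambda>p. p \<in> B) ps"
  define ds where "ds = filter (\<lambda>p. p \<notin> B) ps"
  define fs where "fs = filter (\<lambda>p. p \<notin> A) qs"
  have AP: "A \<subseteq> P" and BP: "B \<subseteq> P" using assms(8,9) unfolding A_def B_def Bplaq_def by auto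
  have pathE: "set path \<subseteq> E" by (rule walk_set[OF assms(5)])
  have cnt: "g \<in> xsum (alpha_p lab) xs \<longleftrightarrow> odd (card (set xs \<inter> {a,b}))"
    if "distinct xs" "set xs \<subseteq> P" "g \<in> E" "a \<in> P" "b \<in> P" "a \<noteq> b" "g \<in> alpha_p lab a" "g \<in> alpha_p lab b" for xs g a b
  proof -
    have "set (filter (\<lambda>p. g \<in> alpha_p lab p) xs) = set xs \<inter> {r\<in>P. g \<in> alpha_p lab r}" using that by auto
    also have "\<dots> = set xs \<inter> {a,b}" using two_faces[of g a b] that by simp
    finally have "length (filter (\<lambda>p. g \<in> alpha_p lab p) xs) = card (set xs \<inter> {a,b})"
      using that(1) by (metis distinct_card distinct_filter)
    then show ?thesis by (simp add: xsum_count)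
  qed
  define S where "S = {p. (p \<in> A) \<noteq> (p \<in> B)}"
  have par: "(a \<in> S \<longleftrightarrow> b \<in> S)"
    if "g \<in> E" "g \<in> Conn E ends path" "a \<in> P" "b \<in> P" "a \<noteq> b" "g \<in> alpha_p lab a" "g \<in> alpha_p lab b" for g a b
  proof -
    have "odd (card (A \<inter> {a,b})) = odd (card (B \<inter> {a,b}))"
      using assms(11) cnt[of ps g a b] cnt[of qs g a b] that assms(6,7) AP BP unfolding A_def B_def by blast
    then show ?thesis unfolding S_def using that(5) by (auto simp: card_pair_int split: if_splits)
  qed
  have sl: "set (ds@fs) = S" "distinct (ds@fs)" "set (ds@fs) \<subseteq> P"
    unfolding S_def ds_def fs_def A_def B_def using assms(6,7) AP BP A_def B_def by auto
  have L: "?g (ds@fs) (symd y ?a) = ?g (ds@fs) y" for y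
  proof (rule path_inv[OF sl(3,2)])
    show "finite ?a" by (rule finite_subset[OF alpha_path_sub]) simp
  next
    fix e assume "e \<in> ?a"
    then have ep: "e \<in> set path" using alpha_path_sub[of path] by blast
    then have eE: "e \<in> E" using pathE by auto
    have "(\<forall>p\<in>P. e \<in> lab p ` {1..12} \<longrightarrow> p \<in> S) \<or> (\<forall>p\<in>P. e \<in> lab p ` {1..12} \<longrightarrow> p \<notin> S)"
    proof (rule status[OF eE])
      fix g a b assume h: "g \<in> E" "ends e \<inter> ends g \<noteq> {} \<or> g = e" "a \<in> P" "b \<in> P" "a \<noteq> b"
        "g \<in> alpha_p lab a" "g \<in> alpha_p lab b"
      have "g \<in> Conn E ends path" using h(1,2) ep unfolding Conn_def by auto
      then show "a \<in> S \<longleftrightarrow> b \<in> S" using par h by blast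
    qed
    then show "(\<forall>p\<in>P. e \<in> lab p ` {1..12} \<longrightarrow> p \<in> set (ds@fs)) \<or> (\<forall>p\<in>P. e \<in> lab p ` {1..12} \<longrightarrow> p \<notin> set (ds@fs))"
      using sl(1) by simp
  qed
  have key: "?g ds (symd z ?a) / ?g ds z = ?g fs (symd z ?a) / ?g fs z" for z
    by (rule key_alg) (use sl L in auto)
  have mps: "mset ps = mset (cs@ds)"
    using assms(6) by (subst set_eq_iff_mset_eq_distinct[symmetric]) (auto simp: cs_def ds_def)
  have mqs: "mset qs = mset (cs@fs)"
    using assms(6,7) by (subst set_eq_iff_mset_eq_distinct[symmetric]) (auto simp: cs_def fs_def A_def B_def)
  let ?XC = "xsum (alpha_p lab) cs"
  have csP: "set cs \<subseteq> P" using AP unfolding cs_def A_def by auto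
  have gps: "?g ps x = ?g cs x * ?g ds (symd x ?XC)" for x
    using perm_inv[OF mps, of x] AP by (simp add: prodphase_append A_def)
  have gqs: "?g qs x = ?g cs x * ?g fs (symd x ?XC)" for x
    using perm_inv[OF mqs, of x] BP by (simp add: prodphase_append B_def)
  have sw: "symd (symd i ?a) ?XC = symd (symd i ?XC) ?a" by (auto simp: symd_def)
  have "theta lab path i ps = (?g cs (symd i ?a) / ?g cs i) * (?g ds (symd (symd i ?XC) ?a) / ?g ds (symd i ?XC))"
    unfolding theta_eq gps sw by simp
  also have "\<dots> = (?g cs (symd i ?a) / ?g cs i) * (?g fs (symd (symd i ?XC) ?a) / ?g fs (symd i ?XC))"
    by (simp only: key)
  also have "\<dots> = theta lab path i qs"
    unfolding theta_eq gqs sw by simp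
  finally show "theta lab path i ps = theta lab path i qs" .
qed

end
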